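(* Let $T$ be a c.n.u. contraction on $H$ and let $(H_+,H_-,\Gamma_+,\Gamma_-)$ be a boundary quadruple for $A_T^{\perp_s}$ with contractive Weyl function $B$. Let $a=(x,y)\in A_T^{\perp_s}\subseteq\mathbb{H}$. Then for $\lambda\in\mathbb{D}_+$, $$\lambda f_{\hat x}(\lambda)-f_{\hat y}(\lambda)=B(\lambda)\Gamma_+a-\Gamma_-a,$$ and for $\lambda\in\mathbb{D}_-$, $$f_{\hat x}(\lambda)-\lambda f_{\hat y}(\lambda)=\Gamma_+a-B(\bar\lambda)^*\Gamma_-a.$$
   Context: $H$ is an infinite-dimensional separable complex Hilbert space with inner product $(\cdot,\cdot)_H$; $T\in\mathbb{B}(H)$, $\|T\|\le1$, is completely non-unitary. $\mathbb{K}=\ker(I-T^*T)$. $\mathbb{H}=H\oplus_\perp H$ with $[(x_1,x_2),(y_1,y_2)]=i(x_1,y_1)_H-i(x_2,y_2)_H$; $S^{\perp_s}=\{a:[a,b]=0\ \forall b\in S\}$; $A_T=\{(x,Tx):x\in\mathbb{K}\}$. $\mathbb{D}_\pm$ are two copies of the open unit disc; for $\lambda\in\mathbb{D}_\pm$, $\bar\lambda$ is regarded as a point of $\mathbb{D}_\mp$. $N_\lambda=\{(x,\lambda x)\}\cap A_T^{\perp_s}$ ($\lambda\in\mathbb{D}_+$), $N_\lambda=\{(\lambda x,x)\}\cap A_T^{\perp_s}$ ($\lambda\in\mathbb{D}_-$). A boundary quadruple: Hilbert spaces $H_\pm$, linear $\Gamma_\pm:A_T^{\perp_s}\to H_\pm$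 with $(\Gamma_+,\Gamma_-)$ bounded, onto $H_+\oplus_\perp H_-$, kernel $A_T$, and $[a,b]=i(\Gamma_+a,\Gamma_+b)-i(\Gamma_-a,\Gamma_-b)$. Contractive Weyl function: for $\lambda\in\mathbb{D}_+$, $\Gamma_+|_{N_\lambda}$ is bijective onto $H_+$ and $\Gamma_-a=B(\lambda)\Gamma_+a$ on $N_\lambda$ with $B(\lambda)\in\mathbb{B}(H_+,H_-)$, $\|B(\lambda)\|<1$; for $\lambda\in\mathbb{D}_-$, $\Gamma_-|_{N_\lambda}$ is bijective onto $H_-$ and $\Gamma_+a=B(\bar\lambda)^*\Gamma_-a$ on $N_\lambda$. $\gamma_+(\lambda)x\in N_\lambda$ with $\Gamma_+\gamma_+(\lambda)x=x$ ($\lambda\in\mathbb{D}_+$), $\gamma_-(\lambda)x\in N_\lambda$ with $\Gamma_-\gamma_-(\lambda)x=x$ ($\lambda\in\mathbb{D}_-$); $\varphi_+=pr_1\circ\gamma_+$, $\varphi_-=pr_2\circ\gamma_-$. $E_\lambda=pr_1(N_\lambda)$ ($\lambda\in\mathbb{D}_+$), $E_\lambda=pr_2(N_\lambda)$ ($\lambda\in\mathbb{D}_-$), $F^\dagger_\lambda=E_{\bar\lambda}$, $F_\lambda$ its conjugate-linear dual with pairing $((\cdot,\cdot))$. For $x\in H$, $\hat x(\lambda)\in F_\lambda$ is $\omega\mapsto(x,\omega)_H$. For $\lambda\in\mathbb{D}_+$, $\varphi_-^\dagger(\lambda):F_\lambda\to H_-$ is defined by $(\varphi_-^\dagger(\lambda)\omega,z)_{H_-}=((\omega,\varphi_-(\bar\lambda)z))$;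 for $\lambda\in\mathbb{D}_-$, $\varphi_+^\dagger(\lambda):F_\lambda\to H_+$ by $(\varphi_+^\dagger(\lambda)\omega,z)_{H_+}=((\omega,\varphi_+(\bar\lambda)z))$. For a section $s$, $f_s(\lambda)=\varphi_-^\dagger(\lambda)s(\lambda)$ ($\lambda\in\mathbb{D}_+$) and $f_s(\lambda)=\varphi_+^\dagger(\lambda)s(\lambda)$ ($\lambda\in\mathbb{D}_-$). *)

theory Defs
  imports "HOL-Analysis.Analysis"
begin

class cinner_space = ab_group_add +
  fixes cscale :: "complex \<Rightarrow> 'a \<Rightarrow> 'a"  (infixr \<open>*\<^sub>C\<close> 75)
    and cinner :: "'a \<Rightarrow> 'a \<Rightarrow> complex"
  assumes cscale_add_right: "a *\<^sub>C (x + y) = a *\<^sub>C x + a *\<^sub>C y"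
    and cscale_add_left: "(a + b) *\<^sub>C x = a *\<^sub>C x + b *\<^sub>C x"
    and cscale_cscale: "a *\<^sub>C (b *\<^sub>C x) = (a * b) *\<^sub>C x"
    and cscale_one: "1 *\<^sub>C x = x"
    and cinner_add_left: "cinner (x + y) z = cinner x z + cinner y z"
    and cinner_cscale_left: "cinner (a *\<^sub>C x) y = a * cinner x y"
    and cinner_commute: "cinner y x = cnj (cinner x y)"
    and cinner_ge_zero: "0 \<le> Re (cinner x x)"
    and cinner_eq_zero: "cinner x x = 0 \<Longrightarrow> x = 0"

definition cnorm :: "'a::cinner_space \<Rightarrow> real" where
  "cnorm x = sqrt (Re (cinner x x))"

class chilbert = cinner_space +
  assumes cinner_complete:
    "(\<forall>e>0. \<exists>N. \<forall>m\<ge>N. \<forall>n\<ge>N. sqrt (Re (cinner (X m - X n) (X m - X n))) < e)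
      \<Longrightarrow> \<exists>L. (\<lambda>n. sqrt (Re (cinner (X n - L) (X n - L)))) \<longlonglongrightarrow> 0"

definition separable_space :: "'a::cinner_space itself \<Rightarrow> bool" where
  "separable_space _ \<longleftrightarrow>
     (\<exists>D::'a set. countable D \<and> (\<forall>x. \<forall>e>0. \<exists>d\<in>D. cnorm (x - d) < e))"

definition infinite_dimensional :: "'a::cinner_space itself \<Rightarrow> bool" where
  "infinite_dimensional _ \<longleftrightarrow>
     (\<forall>F::'a set. finite F \<longrightarrow> (\<exists>x. \<forall>c. x \<noteq> (\<Sum>f\<in>F. c f *\<^sub>C f)))"

definition clinear :: "('a::cinner_space \<Rightarrow> 'b::cinner_space) \<Rightarrow> bool" where
  "clinear f \<longleftrightarrow> (\<forall>x y. f (x + y) = f x + f y) \<and> (\<forall>c x. f (c *\<^sub>C x) = c *\<^sub>C f x)"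

definition cbounded_linear :: "('a::cinner_space \<Rightarrow> 'b::cinner_space) \<Rightarrow> bool" where
  "cbounded_linear f \<longleftrightarrow> clinear f \<and> (\<exists>K. \<forall>x. cnorm (f x) \<le> K * cnorm x)"

definition ccontraction :: "('a::cinner_space \<Rightarrow> 'b::cinner_space) \<Rightarrow> bool" where
  "ccontraction f \<longleftrightarrow> cbounded_linear f \<and> (\<forall>x. cnorm (f x) \<le> cnorm x)"

definition cstrict_contraction :: "('a::cinner_space \<Rightarrow> 'b::cinner_space) \<Rightarrow> bool" where
  "cstrict_contraction f \<longleftrightarrow> cbounded_linear f \<and> (\<exists>c<1. \<forall>x. cnorm (f x) \<le> c * cnorm x)"

definition cadj :: "('a::cinner_space \<Rightarrow> 'b::cinner_space) \<Rightarrow> ('b \<Rightarrow> 'a)" where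
  "cadj T = (THE S. \<forall>x y. cinner (T x) y = cinner x (S y))"

definition closed_csubspace :: "'a::cinner_space set \<Rightarrow> bool" where
  "closed_csubspace M \<longleftrightarrow> 0 \<in> M \<and> (\<forall>x\<in>M. \<forall>y\<in>M. x + y \<in> M) \<and> (\<forall>c. \<forall>x\<in>M. c *\<^sub>C x \<in> M)
     \<and> (\<forall>X L. (\<forall>n. X n \<in> M) \<and> (\<lambda>n. cnorm (X n - L)) \<longlonglongrightarrow> 0 \<longrightarrow> L \<in> M)"

definition completely_non_unitary :: "('a::cinner_space \<Rightarrow> 'a) \<Rightarrow> bool" where
  "completely_non_unitary T \<longleftrightarrow>
     (\<forall>M. closed_csubspace M \<and> T ` M \<subseteq> M \<and> cadj T ` M \<subseteq> M
          \<and> (\<forall>x\<in>M. cadj T (T x) = x \<and> T (cadj T x) = x) \<longrightarrow> M = {0})"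

definition kform :: "'h::cinner_space \<times> 'h \<Rightarrow> 'h \<times> 'h \<Rightarrow> complex" where
  "kform a b = \<i> * cinner (fst a) (fst b) - \<i> * cinner (snd a) (snd b)"

definition padd :: "'h::cinner_space \<times> 'h \<Rightarrow> 'h \<times> 'h \<Rightarrow> 'h \<times> 'h" where
  "padd a b = (fst a + fst b, snd a + snd b)"

definition pscale :: "complex \<Rightarrow> 'h::cinner_space \<times> 'h \<Rightarrow> 'h \<times> 'h" where
  "pscale c a = (c *\<^sub>C fst a, c *\<^sub>C snd a)"

definition kperp :: "('h::cinner_space \<times> 'h) set \<Rightarrow> ('h \<times> 'h) set" where
  "kperp S = {a. \<forall>b\<in>S. kform a b = 0}"

definition defect_kernel :: "('h::cinner_space \<Rightarrow> 'h) \<Rightarrow> 'h set" where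
  "defect_kernel T = {x. x - cadj T (T x) = 0}"

definition A_rel :: "('h::cinner_space \<Rightarrow> 'h) \<Rightarrow> ('h \<times> 'h) set" where
  "A_rel T = {(x, T x) | x. x \<in> defect_kernel T}"

text \<open>Points of the two discs \<open>\<bbbD>\<^sub>\<pm>\<close> are represented by complex numbers of modulus
  less than 1; separate constants are used for the \<open>+\<close> and \<open>-\<close> copies.\<close>

definition N_plus :: "('h::cinner_space \<Rightarrow> 'h) \<Rightarrow> complex \<Rightarrow> ('h \<times> 'h) set" where
  "N_plus T lam = {(x, lam *\<^sub>C x) | x. True} \<inter> kperp (A_rel T)"

definition N_minus :: "('h::cinner_space \<Rightarrow> 'h) \<Rightarrow> complex \<Rightarrow> ('h \<times> 'h) set" where
  "N_minus T lam = {(lam *\<^sub>C x, x) | x. True} \<inter> kperp (A_rel T)"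

definition boundary_quadruple ::
  "('h::cinner_space \<Rightarrow> 'h) \<Rightarrow> ('h \<times> 'h \<Rightarrow> 'p::cinner_space) \<Rightarrow> ('h \<times> 'h \<Rightarrow> 'm::cinner_space) \<Rightarrow> bool" where
  "boundary_quadruple T Gp Gm \<longleftrightarrow>
     (\<forall>a\<in>kperp (A_rel T). \<forall>b\<in>kperp (A_rel T).
         Gp (padd a b) = Gp a + Gp b \<and> Gm (padd a b) = Gm a + Gm b) \<and>
     (\<forall>c. \<forall>a\<in>kperp (A_rel T). Gp (pscale c a) = c *\<^sub>C Gp a \<and> Gm (pscale c a) = c *\<^sub>C Gm a) \<and>
     (\<exists>C. \<forall>a\<in>kperp (A_rel T).
         (cnorm (Gp a))\<^sup>2 + (cnorm (Gm a))\<^sup>2 \<le> C * ((cnorm (fst a))\<^sup>2 + (cnorm (snd a))\<^sup>2)) \<and>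
     (\<forall>u v. \<exists>a\<in>kperp (A_rel T). Gp a = u \<and> Gm a = v) \<and>
     {a\<in>kperp (A_rel T). Gp a = 0 \<and> Gm a = 0} = A_rel T \<and>
     (\<forall>a\<in>kperp (A_rel T). \<forall>b\<in>kperp (A_rel T).
         kform a b = \<i> * cinner (Gp a) (Gp b) - \<i> * cinner (Gm a) (Gm b))"

definition contractive_weyl_function ::
  "('h::cinner_space \<Rightarrow> 'h) \<Rightarrow> ('h \<times> 'h \<Rightarrow> 'p::cinner_space) \<Rightarrow> ('h \<times> 'h \<Rightarrow> 'm::cinner_space)
     \<Rightarrow> (complex \<Rightarrow> 'p \<Rightarrow> 'm) \<Rightarrow> bool" where
  "contractive_weyl_function T Gp Gm B \<longleftrightarrow>
     (\<forall>lam. cmod lam < 1 \<longrightarrow>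
        bij_betw Gp (N_plus T lam) UNIV \<and> cstrict_contraction (B lam) \<and>
        (\<forall>a\<in>N_plus T lam. Gm a = B lam (Gp a))) \<and>
     (\<forall>lam. cmod lam < 1 \<longrightarrow>
        bij_betw Gm (N_minus T lam) UNIV \<and>
        (\<forall>a\<in>N_minus T lam. Gp a = cadj (B (cnj lam)) (Gm a)))"

definition gamma_plus :: "('h::cinner_space \<Rightarrow> 'h) \<Rightarrow> ('h \<times> 'h \<Rightarrow> 'p::cinner_space)
     \<Rightarrow> complex \<Rightarrow> 'p \<Rightarrow> 'h \<times> 'h" where
  "gamma_plus T Gp lam u = (THE a. a \<in> N_plus T lam \<and> Gp a = u)"

definition gamma_minus :: "('h::cinner_space \<Rightarrow> 'h) \<Rightarrow> ('h \<times> 'h \<Rightarrow> 'm::cinner_space)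
     \<Rightarrow> complex \<Rightarrow> 'm \<Rightarrow> 'h \<times> 'h" where
  "gamma_minus T Gm lam u = (THE a. a \<in> N_minus T lam \<and> Gm a = u)"

definition phi_plus where "phi_plus T Gp lam u = fst (gamma_plus T Gp lam u)"
definition phi_minus where "phi_minus T Gm lam u = snd (gamma_minus T Gm lam u)"

text \<open>Elements \<open>\<omega>\<close> of the conjugate-linear dual \<open>F\<^sub>\<lambda>\<close> of \<open>F\<^sup>\<dagger>\<^sub>\<lambda> = E\<^sub>\<bar>\<lambda>\<close> are represented
  by functions \<open>'h \<Rightarrow> complex\<close> (only their values on \<open>E\<^sub>\<bar>\<lambda>\<close> matter); the pairing is
  \<open>((\<omega>, e)) = \<omega> e\<close>. A section is a map from the disc to such functionals.\<close>

definition hat :: "'h::cinner_space \<Rightarrow> complex \<Rightarrow> ('h \<Rightarrow> complex)" where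
  "hat x lam = (\<lambda>w. cinner x w)"

definition phi_minus_dag :: "('h::cinner_space \<Rightarrow> 'h) \<Rightarrow> ('h \<times> 'h \<Rightarrow> 'm::cinner_space)
     \<Rightarrow> complex \<Rightarrow> ('h \<Rightarrow> complex) \<Rightarrow> 'm" where
  "phi_minus_dag T Gm lam \<omega> = (THE v. \<forall>z. cinner v z = \<omega> (phi_minus T Gm (cnj lam) z))"

definition phi_plus_dag :: "('h::cinner_space \<Rightarrow> 'h) \<Rightarrow> ('h \<times> 'h \<Rightarrow> 'p::cinner_space)
     \<Rightarrow> complex \<Rightarrow> ('h \<Rightarrow> complex) \<Rightarrow> 'p" where
  "phi_plus_dag T Gp lam \<omega> = (THE v. \<forall>z. cinner v z = \<omega> (phi_plus T Gp (cnj lam) z))"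

definition f_sec_plus where "f_sec_plus T Gm s lam = phi_minus_dag T Gm lam (s lam)"
definition f_sec_minus where "f_sec_minus T Gp s lam = phi_plus_dag T Gp lam (s lam)"

end

theory Submission
  imports Defs
begin

lemma cscale_zero_left[simp]: "(0::complex) *\<^sub>C (x::'a::cinner_space) = 0"
  by (metis add_cancel_right_left add_0 cscale_add_left)

lemma cscale_zero_right[simp]: "c *\<^sub>C (0::'a::cinner_space) = 0"
  by (metis add_cancel_right_left add_0 cscale_add_right)

lemma cscale_minus_right: "c *\<^sub>C (- (x::'a::cinner_space)) = - (c *\<^sub>C x)"
  by (metis add.right_inverse cscale_add_right cscale_zero_right eq_neg_iff_add_eq_0)

lemma cscale_diff_right: "c *\<^sub>C ((x::'a::cinner_space) - y) = c *\<^sub>C x - c *\<^sub>C y"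
  by (simp only: diff_conv_add_uminus cscale_add_right cscale_minus_right)

lemma cscale_minus_left: "(- c) *\<^sub>C (x::'a::cinner_space) = - (c *\<^sub>C x)"
  by (metis add.right_inverse cscale_add_left cscale_zero_left eq_neg_iff_add_eq_0)

lemma cscale_diff_left: "(c - d) *\<^sub>C (x::'a::cinner_space) = c *\<^sub>C x - d *\<^sub>C x"
  by (simp only: diff_conv_add_uminus cscale_add_left cscale_minus_left)

lemma cinner_zero_left[simp]: "cinner (0::'a::cinner_space) y = 0"
  by (metis cinner_cscale_left cscale_zero_left mult_zero_left)

lemma cinner_zero_right[simp]: "cinner (y::'a::cinner_space) 0 = 0"
  by (metis cinner_commute cinner_zero_left complex_cnj_zero)

lemma cinner_add_right: "cinner (x::'a::cinner_space) (y + z) = cinner x y + cinner x z"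
  by (metis cinner_add_left cinner_commute complex_cnj_add)

lemma cinner_cscale_right: "cinner (x::'a::cinner_space) (c *\<^sub>C y) = cnj c * cinner x y"
  by (metis cinner_commute cinner_cscale_left complex_cnj_cnj complex_cnj_mult)

lemma cinner_minus_left: "cinner (- (x::'a::cinner_space)) y = - cinner x y"
  by (metis add.right_inverse cinner_add_left cinner_zero_left eq_neg_iff_add_eq_0)

lemma cinner_minus_right: "cinner (x::'a::cinner_space) (- y) = - cinner x y"
  by (metis add.right_inverse cinner_add_right cinner_zero_right eq_neg_iff_add_eq_0)

lemma cinner_diff_left: "cinner ((x::'a::cinner_space) - y) z = cinner x z - cinner y z"
  by (simp only: diff_conv_add_uminus cinner_add_left cinner_minus_left)

lemma cinner_diff_right: "cinner (x::'a::cinner_space) (y - z) = cinner x y - cinner x z"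
  by (simp only: diff_conv_add_uminus cinner_add_right cinner_minus_right)

lemma cinner_self_real: "cinner (x::'a::cinner_space) x = complex_of_real (Re (cinner x x))"
proof -
  have "Im (cinner x x) = 0" using arg_cong[OF cinner_commute[of x x], of Im] by simp
  then show ?thesis by (simp add: complex_eq_iff)
qed

lemma cinner_ext: assumes "\<And>z. cinner (u::'a::cinner_space) z = cinner v z" shows "u = v"
proof -
  have "cinner (u - v) (u - v) = 0" using assms by (simp add: cinner_diff_left)
  then show ?thesis using cinner_eq_zero[of "u - v"] by simp
qed

lemma cinner_ext_right: assumes "\<And>z. cinner z (u::'a::cinner_space) = cinner z v" shows "u = v"
proof (rule cinner_ext)
  fix z show "cinner u z = cinner v z"
    using assms[of z] by (metis cinner_commute)
qed

lemma cinner_cscale_self: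
  "cinner (c *\<^sub>C x) (c *\<^sub>C (x::'a::cinner_space)) = complex_of_real ((cmod c)^2 * Re (cinner x x))"
proof -
  have "cinner (c *\<^sub>C x) (c *\<^sub>C x) = (c * cnj c) * cinner x x"
    by (simp add: cinner_cscale_left cinner_cscale_right)
  also have "\<dots> = complex_of_real ((cmod c)^2) * complex_of_real (Re (cinner x x))"
    by (metis cinner_self_real complex_norm_square of_real_power)
  finally show ?thesis by simp
qed

lemma cnorm_sq: "(cnorm x)^2 = Re (cinner (x::'a::cinner_space) x)"
  by (simp add: cnorm_def cinner_ge_zero)

lemma cnorm_nonneg: "0 \<le> cnorm (x::'a::cinner_space)"
  by (simp add: cnorm_def cinner_ge_zero)

lemma cauchy_schwarz_sq:
  "(cmod (cinner x y))^2 \<le> Re (cinner x x) * Re (cinner (y::'a::cinner_space) y)"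
proof (cases "y = 0")
  case True then show ?thesis by simp
next
  case False
  define r where "r = Re (cinner y y)"
  define c where "c = cinner x y"
  have yy: "cinner y y = complex_of_real r" using cinner_self_real r_def by blast
  have r0: "r \<noteq> 0" using False yy cinner_eq_zero by force
  have rpos: "r > 0" using r0 cinner_ge_zero[of y] r_def by linarith
  have yx: "cinner y x = cnj c" using c_def cinner_commute by blast
  define t where "t = c / complex_of_real r"
  have "cinner (x - t *\<^sub>C y) (x - t *\<^sub>C y)
      = cinner x x - cnj t * c - t * cnj c + t * cnj t * complex_of_real r"
    by (simp add: cinner_diff_left cinner_diff_right cinner_cscale_left cinner_cscale_right
        yy yx c_def[symmetric] algebra_simps)
  also have "\<dots> = cinner x x - c * cnj c / complex_of_real r"
    using r0 by (simp add: t_def field_simps)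
  also have "\<dots> = complex_of_real (Re (cinner x x) - (cmod c)^2 / r)"
    by (metis cinner_self_real complex_norm_square of_real_diff of_real_divide of_real_power)
  finally have "0 \<le> Re (cinner x x) - (cmod c)^2 / r"
    using cinner_ge_zero[of "x - t *\<^sub>C y"] by simp
  then have "(cmod c)^2 / r \<le> Re (cinner x x)" by simp
  then have "(cmod c)^2 \<le> Re (cinner x x) * r" using rpos by (simp add: divide_le_eq)
  then show ?thesis by (simp add: c_def r_def)
qed

lemma cauchy_schwarz: "cmod (cinner x y) \<le> cnorm x * cnorm (y::'a::cinner_space)"
proof -
  have "cmod (cinner x y) = sqrt ((cmod (cinner x y))^2)" by simp
  also have "\<dots> \<le> sqrt (Re (cinner x x) * Re (cinner y y))"
    using cauchy_schwarz_sq real_sqrt_le_mono by blast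
  also have "\<dots> = cnorm x * cnorm y" by (simp add: cnorm_def real_sqrt_mult)
  finally show ?thesis .
qed

lemma cnorm_triangle: "cnorm (x + y) \<le> cnorm x + cnorm (y::'a::cinner_space)"
proof -
  have e: "cinner (x + y) (x + y) = cinner x x + cinner y y + (cinner x y + cnj (cinner x y))"
    by (simp add: cinner_add_left cinner_add_right algebra_simps cinner_commute[of y x])
  have "Re (cinner x y) \<le> cnorm x * cnorm y"
    using cauchy_schwarz[of x y] complex_Re_le_cmod order_trans by blast
  then have "Re (cinner (x + y) (x + y)) \<le> (cnorm x + cnorm y)^2"
    using e by (simp add: power2_sum cnorm_sq)
  then have "sqrt (Re (cinner (x + y) (x + y))) \<le> sqrt ((cnorm x + cnorm y)^2)"
    using real_sqrt_le_mono by blast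
  then show ?thesis by (simp add: cnorm_def[of "x+y"] cnorm_nonneg)
qed

lemma cnorm_minus_commute: "cnorm (x - y) = cnorm (y - (x::'a::cinner_space))"
proof -
  have "x - y = - (y - x)" by simp
  then show ?thesis by (simp only: cnorm_def cinner_minus_left cinner_minus_right minus_minus)
qed

lemma parallelogram:
  "Re (cinner (a - b) (a - b)) + Re (cinner (a + b) (a + b))
     = 2 * Re (cinner a a) + 2 * Re (cinner (b::'a::cinner_space) b)"
  by (simp add: cinner_diff_left cinner_diff_right cinner_add_left cinner_add_right)

lemma riesz:
  fixes l :: "'a::chilbert \<Rightarrow> complex"
  assumes ladd: "\<And>x y. l (x + y) = l x + l y"
    and lsc: "\<And>c x. l (c *\<^sub>C x) = c * l x"
    and lbd: "\<And>x. cmod (l x) \<le> K * cnorm x"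
  shows "\<exists>v. \<forall>x. l x = cinner x v"
proof (cases "\<forall>x. l x = 0")
  case True then show ?thesis by (intro exI[of _ 0]) simp
next
  case False
  then obtain x0 where x0: "l x0 \<noteq> 0" by auto
  have l0: "l 0 = 0" using ladd[of 0 0] by simp
  have lminus: "l (x - y) = l x - l y" for x y using ladd[of "x - y" y] by simp
  define z1 where "z1 = (1 / l x0) *\<^sub>C x0"
  have z1: "l z1 = 1" using x0 by (simp add: z1_def lsc)
  define q where "q x = Re (cinner x x)" for x :: 'a
  define S where "S = {z. l z = 1}"
  define D where "D = Inf (q ` S)"
  have q0: "0 \<le> q x" for x by (simp add: q_def cinner_ge_zero)
  have bdd: "bdd_below (q ` S)" using q0 by (meson bdd_belowI2)
  have ne: "q ` S \<noteq> {}" using z1 S_def by auto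
  have Dle: "D \<le> q z" if "l z = 1" for z
    unfolding D_def by (rule cInf_lower[OF _ bdd]) (use that S_def in auto)
  have D0: "0 \<le> D" unfolding D_def using cInf_greatest[OF ne] q0 by auto
  have "\<exists>z. l z = 1 \<and> q z < D + inverse (real (Suc n))" for n
  proof -
    have "Inf (q ` S) < D + inverse (real (Suc n))" by (simp add: D_def)
    then obtain w where "w \<in> q ` S" "w < D + inverse (real (Suc n))"
      using cInf_lessD[OF ne] by blast
    then show ?thesis using S_def by auto
  qed
  then obtain X where X: "\<And>n. l (X n) = 1" "\<And>n. q (X n) < D + inverse (real (Suc n))"
    by metis
  have half: "l ((1/2) *\<^sub>C (X n + X m)) = 1" for n m by (simp add: lsc ladd X)
  have qsc: "q (c *\<^sub>C w) = (cmod c)^2 * q w" for c w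
    by (simp add: q_def cinner_cscale_self)
  have par: "q (a - b) + q (a + b) = 2 * q a + 2 * q b" for a b
    unfolding q_def by (rule parallelogram)
  have cauchy_bd: "q (X n - X m) \<le> 2 * inverse (real (Suc n)) + 2 * inverse (real (Suc m))" for n m
  proof -
    have "q (X n + X m) = 4 * q ((1/2) *\<^sub>C (X n + X m))" using qsc[of "1/2" "X n + X m"] by (simp add: power2_eq_square)
    moreover have "D \<le> q ((1/2) *\<^sub>C (X n + X m))" using Dle half by blast
    ultimately show ?thesis using par[of "X n" "X m"] X(2)[of n] X(2)[of m] by linarith
  qed
  have "\<forall>e>0. \<exists>N. \<forall>m\<ge>N. \<forall>n\<ge>N. sqrt (Re (cinner (X m - X n) (X m - X n))) < e"
  proof (intro allI impI)
    fix e :: real assume e: "e > 0"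
    then have "e^2/4 > 0" by simp
    then obtain N where N: "inverse (real (Suc N)) < e^2/4" using reals_Archimedean by blast
    show "\<exists>N. \<forall>m\<ge>N. \<forall>n\<ge>N. sqrt (Re (cinner (X m - X n) (X m - X n))) < e"
    proof (intro exI allI impI)
      fix m n assume mn: "m \<ge> N" "n \<ge> N"
      have a: "inverse (real (Suc m)) \<le> inverse (real (Suc N))" using mn
        by (simp add: le_imp_inverse_le)
      have b: "inverse (real (Suc n)) \<le> inverse (real (Suc N))" using mn
        by (simp add: le_imp_inverse_le)
      have "q (X m - X n) < e^2" using cauchy_bd[of m n] N a b by linarith
      then have "sqrt (q (X m - X n)) < sqrt (e^2)" using real_sqrt_less_mono by blast
      then show "sqrt (Re (cinner (X m - X n) (X m - X n))) < e" using e by (simp add: q_def)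
    qed
  qed
  then obtain L where L: "(\<lambda>n. sqrt (Re (cinner (X n - L) (X n - L)))) \<longlonglongrightarrow> 0"
    using cinner_complete by blast
  define s where "s n = sqrt (q (X n - L))" for n
  have s: "s \<longlonglongrightarrow> 0" using L by (simp add: s_def[abs_def] q_def)
  have lL: "l L = 1"
  proof -
    have "cmod (1 - l L) \<le> K * s n" for n
      using lbd[of "X n - L"] lminus[of "X n" L] X(1)[of n] by (simp add: s_def cnorm_def q_def)
    moreover have "(\<lambda>n. K * s n) \<longlonglongrightarrow> K * 0" by (intro tendsto_intros s)
    ultimately have "cmod (1 - l L) \<le> K * 0" using LIMSEQ_le_const by blast
    then show ?thesis by simp
  qed
  have qL: "q L \<le> D"
  proof -
    have "sqrt (q L) \<le> sqrt (D + inverse (real (Suc n))) + s n" for n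
    proof -
      have t: "cnorm L \<le> cnorm (X n) + cnorm (L - X n)" using cnorm_triangle[of "X n" "L - X n"] by simp
      have e1: "cnorm (L - X n) = s n" by (simp add: s_def q_def cnorm_def[symmetric] cnorm_minus_commute)
      have e2: "cnorm (X n) \<le> sqrt (D + inverse (real (Suc n)))"
        using X(2)[of n] unfolding cnorm_def q_def by (intro real_sqrt_le_mono) simp
      have "sqrt (q L) = cnorm L" by (simp add: cnorm_def q_def)
      then show ?thesis using t e1 e2 by linarith
    qed
    moreover have "(\<lambda>n. sqrt (D + inverse (real (Suc n))) + s n) \<longlonglongrightarrow> sqrt (D + 0) + 0"
      by (intro tendsto_intros s LIMSEQ_inverse_real_of_nat)
    ultimately have "sqrt (q L) \<le> sqrt (D + 0) + 0" using LIMSEQ_le_const by blast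
    then show ?thesis by simp
  qed
  have orth: "cinner k L = 0" if lk: "l k = 0" for k
  proof -
    define c where "c = cinner k L"
    define \<epsilon> where "\<epsilon> = 1 / (q k + 1)"
    have \<epsilon>0: "\<epsilon> > 0" using q0[of k] by (simp add: \<epsilon>_def)
    have \<epsilon>1: "\<epsilon> * q k < 1" using q0[of k] by (simp add: \<epsilon>_def)
    define t where "t = - (complex_of_real \<epsilon> * cnj c)"
    have "l (L + t *\<^sub>C k) = 1" using lL lk by (simp add: ladd lsc)
    then have "D \<le> q (L + t *\<^sub>C k)" by (rule Dle)
    with qL have ineq: "q L \<le> q (L + t *\<^sub>C k)" by simp
    have kk: "cinner k k = complex_of_real (q k)" unfolding q_def by (rule cinner_self_real)
    have cc: "c * cnj c = complex_of_real ((cmod c)^2)" by (metis complex_norm_square of_real_power)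
    have "cinner (L + t *\<^sub>C k) (L + t *\<^sub>C k)
        = cinner L L + cnj t * cnj c + t * c + t * cnj t * cinner k k"
      by (simp add: cinner_add_left cinner_add_right cinner_cscale_left cinner_cscale_right
          c_def cinner_commute[of L k] algebra_simps)
    also have "\<dots> = cinner L L + (- 2 * complex_of_real \<epsilon> * (c * cnj c)
        + (complex_of_real \<epsilon>)^2 * (c * cnj c) * complex_of_real (q k))"
      unfolding t_def kk complex_cnj_minus complex_cnj_mult complex_cnj_complex_of_real complex_cnj_cnj
      by algebra
    also have "\<dots> = cinner L L + complex_of_real (- 2 * \<epsilon> * (cmod c)^2 + \<epsilon>^2 * (cmod c)^2 * q k)"
      unfolding cc by simp
    finally have "q (L + t *\<^sub>C k) = q L + (- 2 * \<epsilon> * (cmod c)^2 + \<epsilon>^2 * (cmod c)^2 * q k)"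
      by (simp add: q_def)
    with ineq have "0 \<le> \<epsilon> * ((cmod c)^2 * (\<epsilon> * q k - 2))"
      by (simp add: algebra_simps power2_eq_square)
    then have "0 \<le> (cmod c)^2 * (\<epsilon> * q k - 2)" using \<epsilon>0 by (simp add: zero_le_mult_iff)
    moreover have "\<epsilon> * q k - 2 < 0" using \<epsilon>1 by simp
    ultimately have "(cmod c)^2 \<le> 0" by (simp add: zero_le_mult_iff)
    then show ?thesis by (simp add: c_def)
  qed
  have LL: "cinner L L = complex_of_real (q L)" unfolding q_def by (rule cinner_self_real)
  have qLnz: "q L \<noteq> 0"
  proof
    assume "q L = 0"
    then have "L = 0" using LL cinner_eq_zero by simp
    then show False using lL l0 by simp
  qed
  define v where "v = complex_of_real (1 / q L) *\<^sub>C L"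
  show ?thesis
  proof (intro exI allI)
    fix x
    have "l (x - l x *\<^sub>C L) = 0" by (simp add: lminus lsc lL)
    then have "cinner (x - l x *\<^sub>C L) L = 0" by (rule orth)
    then have "cinner x L = l x * complex_of_real (q L)"
      by (simp add: cinner_diff_left cinner_cscale_left LL)
    then show "l x = cinner x v" using qLnz by (simp add: v_def cinner_cscale_right)
  qed
qed

lemma dual_exists:
  fixes \<phi> :: "'a::chilbert \<Rightarrow> 'b::cinner_space"
  assumes "\<And>z w. \<phi> (z + w) = \<phi> z + \<phi> w" "\<And>c z. \<phi> (c *\<^sub>C z) = c *\<^sub>C \<phi> z"
    and "\<And>z. cnorm (\<phi> z) \<le> K * cnorm z"
  shows "\<exists>v. \<forall>z. cinner v z = cinner x (\<phi> z)"
proof -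
  have "\<exists>v. \<forall>z. cinner (\<phi> z) x = cinner z v"
  proof (rule riesz[where K = "K * cnorm x"])
    fix z
    have "cmod (cinner (\<phi> z) x) \<le> cnorm (\<phi> z) * cnorm x" by (rule cauchy_schwarz)
    also have "\<dots> \<le> K * cnorm z * cnorm x"
      using assms(3) cnorm_nonneg mult_right_mono by blast
    finally show "cmod (cinner (\<phi> z) x) \<le> K * cnorm x * cnorm z" by (simp add: algebra_simps)
  qed (simp_all add: assms cinner_add_left cinner_cscale_left)
  then obtain v where v: "\<And>z. cinner (\<phi> z) x = cinner z v" by blast
  show ?thesis
  proof (intro exI allI)
    fix z show "cinner v z = cinner x (\<phi> z)"
      by (metis v cinner_commute)
  qed
qed

lemma the_dual:
  assumes "\<forall>z. cinner (v::'a::cinner_space) z = F z"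
  shows "(THE v. \<forall>z. cinner v z = F z) = v"
proof (rule the_equality)
  show "\<forall>z. cinner v z = F z" by (rule assms)
next
  fix w assume "\<forall>z. cinner w z = F z"
  then show "w = v" using assms by (intro cinner_ext) simp
qed

lemma cadj_prop:
  fixes B :: "'a::chilbert \<Rightarrow> 'b::chilbert"
  assumes "cbounded_linear B"
  shows "cinner (B x) y = cinner x (cadj B y)"
proof -
  obtain K where lin: "clinear B" and K: "\<And>x. cnorm (B x) \<le> K * cnorm x"
    using assms unfolding cbounded_linear_def by blast
  have "\<exists>v. \<forall>x. cinner (B x) y = cinner x v" for y
  proof (rule riesz[where K = "K * cnorm y"])
    fix x
    have "cmod (cinner (B x) y) \<le> cnorm (B x) * cnorm y" by (rule cauchy_schwarz)
    also have "\<dots> \<le> K * cnorm x * cnorm y"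
      using K cnorm_nonneg mult_right_mono by blast
    finally show "cmod (cinner (B x) y) \<le> K * cnorm y * cnorm x" by (simp add: algebra_simps)
  qed (use lin in \<open>simp_all add: clinear_def cinner_add_left cinner_cscale_left\<close>)
  then obtain S where S: "\<And>y x. cinner (B x) y = cinner x (S y)" by metis
  have "cadj B = S" unfolding cadj_def
  proof (rule the_equality)
    show "\<forall>x y. cinner (B x) y = cinner x (S y)" using S by blast
  next
    fix S' assume S': "\<forall>x y. cinner (B x) y = cinner x (S' y)"
    show "S' = S"
    proof
      fix y show "S' y = S y" using S S' by (intro cinner_ext_right) metis
    qed
  qed
  then show ?thesis using S by simp
qed

lemma N_minus_iff: "a \<in> N_minus T \<mu> \<longleftrightarrow> fst a = \<mu> *\<^sub>C snd a \<and> a \<in> kperp (A_rel T)"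
  by (cases a) (auto simp: N_minus_def)

lemma N_plus_iff: "a \<in> N_plus T \<mu> \<longleftrightarrow> snd a = \<mu> *\<^sub>C fst a \<and> a \<in> kperp (A_rel T)"
  by (cases a) (auto simp: N_plus_def)

lemma kperp_padd: "a \<in> kperp S \<Longrightarrow> b \<in> kperp S \<Longrightarrow> padd a b \<in> kperp S"
  by (simp add: kperp_def kform_def padd_def cinner_add_left algebra_simps)

lemma kperp_pscale: "a \<in> kperp S \<Longrightarrow> pscale c a \<in> kperp S"
proof -
  assume a: "a \<in> kperp S"
  have "kform (pscale c a) b = c * kform a b" for b
    by (simp add: kform_def pscale_def cinner_cscale_left algebra_simps)
  then show ?thesis using a by (simp add: kperp_def)
qed

lemma bound_from_sq:
  assumes "(1 - (cmod \<mu>)^2) * Re (cinner w w) \<le> Re (cinner u u)" "cmod \<mu> < 1"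
  shows "cnorm (w::'a::cinner_space) \<le> (1 / sqrt (1 - (cmod \<mu>)^2)) * cnorm (u::'b::cinner_space)"
proof -
  define d where "d = 1 - (cmod \<mu>)^2"
  have d: "d > 0" using assms(2) by (simp add: d_def abs_square_less_1)
  have "Re (cinner w w) \<le> Re (cinner u u) / d" using assms(1) d by (simp add: d_def[symmetric] field_simps)
  then have "sqrt (Re (cinner w w)) \<le> sqrt (Re (cinner u u) / d)" using real_sqrt_le_mono by blast
  then show ?thesis by (simp add: cnorm_def d_def[symmetric] real_sqrt_divide)
qed

lemma i_cancel: "\<i> * a - \<i> * b = \<i> * c - \<i> * d \<Longrightarrow> a - b = c - (d::complex)"
proof -
  assume "\<i> * a - \<i> * b = \<i> * c - \<i> * d"
  then have "\<i> * (a - b) = \<i> * (c - d)" by (simp add: right_diff_distrib)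
  then show ?thesis by simp
qed

theorem theorem4p14:
  fixes T :: "'h::chilbert \<Rightarrow> 'h"
    and Gp :: "'h \<times> 'h \<Rightarrow> 'p::chilbert"
    and Gm :: "'h \<times> 'h \<Rightarrow> 'm::chilbert"
    and B :: "complex \<Rightarrow> 'p \<Rightarrow> 'm"
    and x y :: 'h
  assumes "separable_space TYPE('h)"
    and "infinite_dimensional TYPE('h)"
    and "ccontraction T"
    and "completely_non_unitary T"
    and "boundary_quadruple T Gp Gm"
    and "contractive_weyl_function T Gp Gm B"
    and "(x, y) \<in> kperp (A_rel T)"
  shows "(\<forall>lam. cmod lam < 1 \<longrightarrow>
            lam *\<^sub>C f_sec_plus T Gm (hat x) lam - f_sec_plus T Gm (hat y) lam
              = B lam (Gp (x, y)) - Gm (x, y))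
       \<and> (\<forall>lam. cmod lam < 1 \<longrightarrow>
            f_sec_minus T Gp (hat x) lam - lam *\<^sub>C f_sec_minus T Gp (hat y) lam
              = Gp (x, y) - cadj (B (cnj lam)) (Gm (x, y)))"
proof -
  let ?K = "kperp (A_rel T)"
  define a where "a = (x, y)"
  have aK: "a \<in> ?K" using assms(7) a_def by simp
  note bq = assms(5)[unfolded boundary_quadruple_def]
  have Gadd: "Gp (padd b b') = Gp b + Gp b'" "Gm (padd b b') = Gm b + Gm b'"
    if "b \<in> ?K" "b' \<in> ?K" for b b' using bq that by blast+
  have Gsc: "Gp (pscale c b) = c *\<^sub>C Gp b" "Gm (pscale c b) = c *\<^sub>C Gm b"
    if "b \<in> ?K" for b c using bq that by blast+
  have Gform: "kform b b' = \<i> * cinner (Gp b) (Gp b') - \<i> * cinner (Gm b) (Gm b')"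
    if "b \<in> ?K" "b' \<in> ?K" for b b' using bq that by blast
  note W = assms(6)[unfolded contractive_weyl_function_def]
  have Wp: "bij_betw Gp (N_plus T \<mu>) UNIV" "cbounded_linear (B \<mu>)"
    "\<And>b. b \<in> N_plus T \<mu> \<Longrightarrow> Gm b = B \<mu> (Gp b)" if "cmod \<mu> < 1" for \<mu>
    using W that by (auto simp: cstrict_contraction_def)
  have Wm: "bij_betw Gm (N_minus T \<mu>) UNIV"
    "\<And>b. b \<in> N_minus T \<mu> \<Longrightarrow> Gp b = cadj (B (cnj \<mu>)) (Gm b)" if "cmod \<mu> < 1" for \<mu>
    using W that by auto
  have part1: "lam *\<^sub>C f_sec_plus T Gm (hat x) lam - f_sec_plus T Gm (hat y) lam
              = B lam (Gp a) - Gm a" if lam: "cmod lam < 1" for lam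
  proof -
    define \<mu> where "\<mu> = cnj lam"
    have \<mu>: "cmod \<mu> < 1" using lam by (simp add: \<mu>_def)
    have ex1: "\<exists>!b. b \<in> N_minus T \<mu> \<and> Gm b = u" for u
    proof -
      from Wm(1)[OF \<mu>] have inj: "inj_on Gm (N_minus T \<mu>)" and surj: "Gm ` N_minus T \<mu> = UNIV"
        by (auto simp: bij_betw_def)
      from surj obtain b where b: "b \<in> N_minus T \<mu>" "Gm b = u" by (metis UNIV_I imageE)
      show ?thesis by (rule ex1I[of _ b]) (use b inj_onD[OF inj] in auto)
    qed
    define \<gamma> where "\<gamma> u = gamma_minus T Gm \<mu> u" for u
    have \<gamma>: "\<gamma> u \<in> N_minus T \<mu>" "Gm (\<gamma> u) = u" for u
      using theI'[OF ex1[of u]] by (simp_all add: \<gamma>_def gamma_minus_def)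
    have \<gamma>uniq: "\<gamma> u = b" if "b \<in> N_minus T \<mu>" "Gm b = u" for b u
      using the1_equality[OF ex1[of u]] that by (simp add: \<gamma>_def gamma_minus_def)
    have \<gamma>K: "\<gamma> u \<in> ?K" for u using \<gamma>(1) N_minus_iff by blast
    have \<gamma>fst: "fst (\<gamma> u) = \<mu> *\<^sub>C snd (\<gamma> u)" for u using \<gamma>(1) N_minus_iff by blast
    define \<phi> where "\<phi> u = snd (\<gamma> u)" for u
    have \<phi>add: "\<phi> (u + v) = \<phi> u + \<phi> v" for u v
    proof -
      have m: "padd (\<gamma> u) (\<gamma> v) \<in> ?K" by (rule kperp_padd[OF \<gamma>K \<gamma>K])
      have "padd (\<gamma> u) (\<gamma> v) \<in> N_minus T \<mu>"
        using m unfolding N_minus_iff by (simp add: padd_def \<gamma>fst cscale_add_right)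
      moreover have "Gm (padd (\<gamma> u) (\<gamma> v)) = u + v" using Gadd(2) \<gamma>K \<gamma>(2) by simp
      ultimately have "\<gamma> (u + v) = padd (\<gamma> u) (\<gamma> v)" by (rule \<gamma>uniq)
      then show ?thesis by (simp add: \<phi>_def padd_def)
    qed
    have \<phi>sc: "\<phi> (c *\<^sub>C u) = c *\<^sub>C \<phi> u" for c u
    proof -
      have m: "pscale c (\<gamma> u) \<in> ?K" by (rule kperp_pscale[OF \<gamma>K])
      have "pscale c (\<gamma> u) \<in> N_minus T \<mu>"
        using m unfolding N_minus_iff by (simp add: pscale_def \<gamma>fst cscale_cscale mult.commute)
      moreover have "Gm (pscale c (\<gamma> u)) = c *\<^sub>C u" using Gsc(2) \<gamma>K \<gamma>(2) by simp
      ultimately have "\<gamma> (c *\<^sub>C u) = pscale c (\<gamma> u)" by (rule \<gamma>uniq)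
      then show ?thesis by (simp add: \<phi>_def pscale_def)
    qed
    have \<phi>bd: "cnorm (\<phi> u) \<le> (1 / sqrt (1 - (cmod \<mu>)^2)) * cnorm u" for u
    proof (rule bound_from_sq[OF _ \<mu>])
      define b where "b = \<gamma> u"
      have bb: "b = (\<mu> *\<^sub>C \<phi> u, \<phi> u)" using \<gamma>fst[of u] by (simp add: b_def \<phi>_def prod_eq_iff)
      have "kform b b = \<i> * cinner (Gp b) (Gp b) - \<i> * cinner (Gm b) (Gm b)"
        using Gform \<gamma>K b_def by blast
      moreover have kb: "kform b b = \<i> * cinner (\<mu> *\<^sub>C \<phi> u) (\<mu> *\<^sub>C \<phi> u) - \<i> * cinner (\<phi> u) (\<phi> u)"
        using bb by (simp add: kform_def)
      moreover have Gmb: "Gm b = u" using \<gamma>(2) b_def by simp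
      ultimately have "\<i> * cinner (\<mu> *\<^sub>C \<phi> u) (\<mu> *\<^sub>C \<phi> u) - \<i> * cinner (\<phi> u) (\<phi> u)
          = \<i> * cinner (Gp b) (Gp b) - \<i> * cinner u u"
        by simp
      then have "cinner (\<mu> *\<^sub>C \<phi> u) (\<mu> *\<^sub>C \<phi> u) - cinner (\<phi> u) (\<phi> u)
          = cinner (Gp b) (Gp b) - cinner u u" by (rule i_cancel)
      from arg_cong[OF this, of Re] have "(cmod \<mu>)^2 * Re (cinner (\<phi> u) (\<phi> u)) - Re (cinner (\<phi> u) (\<phi> u))
          = Re (cinner (Gp b) (Gp b)) - Re (cinner u u)"
        by (simp only: minus_complex.sel cinner_cscale_self Re_complex_of_real)
      then show "(1 - (cmod \<mu>)^2) * Re (cinner (\<phi> u) (\<phi> u)) \<le> Re (cinner u u)"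
        using cinner_ge_zero[of "Gp b"] by (simp add: algebra_simps)
    qed
    obtain vx where vx: "\<forall>z. cinner vx z = cinner x (\<phi> z)"
      using dual_exists[OF \<phi>add \<phi>sc \<phi>bd] by blast
    obtain vy where vy: "\<forall>z. cinner vy z = cinner y (\<phi> z)"
      using dual_exists[OF \<phi>add \<phi>sc \<phi>bd] by blast
    have phim: "phi_minus T Gm (cnj lam) z = \<phi> z" for z
      by (simp add: phi_minus_def \<phi>_def \<gamma>_def \<mu>_def)
    have fx: "f_sec_plus T Gm (hat x) lam = vx"
      unfolding f_sec_plus_def phi_minus_dag_def hat_def phim using vx by (rule the_dual)
    have fy: "f_sec_plus T Gm (hat y) lam = vy"
      unfolding f_sec_plus_def phi_minus_dag_def hat_def phim using vy by (rule the_dual)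
    have BL: "cbounded_linear (B lam)" using Wp(2)[OF lam] .
    show ?thesis unfolding fx fy
    proof (rule cinner_ext)
      fix z
      define b where "b = \<gamma> z"
      have bb: "b = (\<mu> *\<^sub>C \<phi> z, \<phi> z)" using \<gamma>fst[of z] by (simp add: b_def \<phi>_def prod_eq_iff)
      have Gpb: "Gp b = cadj (B lam) z" using Wm(2)[OF \<mu> \<gamma>(1)[of z]] \<gamma>(2)[of z]
        by (simp add: b_def \<mu>_def)
      have "kform a b = \<i> * cinner (Gp a) (Gp b) - \<i> * cinner (Gm a) (Gm b)"
        using Gform aK \<gamma>K b_def by blast
      moreover have kb: "kform a b = \<i> * (lam * cinner x (\<phi> z)) - \<i> * cinner y (\<phi> z)"
        using bb by (simp add: kform_def a_def cinner_cscale_right \<mu>_def)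
      moreover have Gmb: "Gm b = z" using \<gamma>(2) b_def by simp
      moreover have adj: "cinner (Gp a) (Gp b) = cinner (B lam (Gp a)) z"
        using cadj_prop[OF BL, of "Gp a" z] Gpb by simp
      ultimately have "\<i> * (lam * cinner x (\<phi> z)) - \<i> * cinner y (\<phi> z)
          = \<i> * cinner (B lam (Gp a)) z - \<i> * cinner (Gm a) z"
        by simp
      then have "lam * cinner x (\<phi> z) - cinner y (\<phi> z) = cinner (B lam (Gp a)) z - cinner (Gm a) z"
        by (rule i_cancel)
      then show "cinner (lam *\<^sub>C vx - vy) z = cinner (B lam (Gp a) - Gm a) z"
        using vx vy by (simp add: cinner_diff_left cinner_cscale_left)
    qed
  qed
  have part2: "f_sec_minus T Gp (hat x) lam - lam *\<^sub>C f_sec_minus T Gp (hat y) lam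
              = Gp a - cadj (B (cnj lam)) (Gm a)" if lam: "cmod lam < 1" for lam
  proof -
    define \<mu> where "\<mu> = cnj lam"
    have \<mu>: "cmod \<mu> < 1" using lam by (simp add: \<mu>_def)
    have ex1: "\<exists>!b. b \<in> N_plus T \<mu> \<and> Gp b = u" for u
    proof -
      from Wp(1)[OF \<mu>] have inj: "inj_on Gp (N_plus T \<mu>)" and surj: "Gp ` N_plus T \<mu> = UNIV"
        by (auto simp: bij_betw_def)
      from surj obtain b where b: "b \<in> N_plus T \<mu>" "Gp b = u" by (metis UNIV_I imageE)
      show ?thesis by (rule ex1I[of _ b]) (use b inj_onD[OF inj] in auto)
    qed
    define \<gamma> where "\<gamma> u = gamma_plus T Gp \<mu> u" for u
    have \<gamma>: "\<gamma> u \<in> N_plus T \<mu>" "Gp (\<gamma> u) = u" for u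
      using theI'[OF ex1[of u]] by (simp_all add: \<gamma>_def gamma_plus_def)
    have \<gamma>uniq: "\<gamma> u = b" if "b \<in> N_plus T \<mu>" "Gp b = u" for b u
      using the1_equality[OF ex1[of u]] that by (simp add: \<gamma>_def gamma_plus_def)
    have \<gamma>K: "\<gamma> u \<in> ?K" for u using \<gamma>(1) N_plus_iff by blast
    have \<gamma>snd: "snd (\<gamma> u) = \<mu> *\<^sub>C fst (\<gamma> u)" for u using \<gamma>(1) N_plus_iff by blast
    define \<phi> where "\<phi> u = fst (\<gamma> u)" for u
    have \<phi>add: "\<phi> (u + v) = \<phi> u + \<phi> v" for u v
    proof -
      have m: "padd (\<gamma> u) (\<gamma> v) \<in> ?K" by (rule kperp_padd[OF \<gamma>K \<gamma>K])
      have "padd (\<gamma> u) (\<gamma> v) \<in> N_plus T \<mu>"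
        using m unfolding N_plus_iff by (simp add: padd_def \<gamma>snd cscale_add_right)
      moreover have "Gp (padd (\<gamma> u) (\<gamma> v)) = u + v" using Gadd(1) \<gamma>K \<gamma>(2) by simp
      ultimately have "\<gamma> (u + v) = padd (\<gamma> u) (\<gamma> v)" by (rule \<gamma>uniq)
      then show ?thesis by (simp add: \<phi>_def padd_def)
    qed
    have \<phi>sc: "\<phi> (c *\<^sub>C u) = c *\<^sub>C \<phi> u" for c u
    proof -
      have m: "pscale c (\<gamma> u) \<in> ?K" by (rule kperp_pscale[OF \<gamma>K])
      have "pscale c (\<gamma> u) \<in> N_plus T \<mu>"
        using m unfolding N_plus_iff by (simp add: pscale_def \<gamma>snd cscale_cscale mult.commute)
      moreover have "Gp (pscale c (\<gamma> u)) = c *\<^sub>C u" using Gsc(1) \<gamma>K \<gamma>(2) by simp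
      ultimately have "\<gamma> (c *\<^sub>C u) = pscale c (\<gamma> u)" by (rule \<gamma>uniq)
      then show ?thesis by (simp add: \<phi>_def pscale_def)
    qed
    have \<phi>bd: "cnorm (\<phi> u) \<le> (1 / sqrt (1 - (cmod \<mu>)^2)) * cnorm u" for u
    proof (rule bound_from_sq[OF _ \<mu>])
      define b where "b = \<gamma> u"
      have bb: "b = (\<phi> u, \<mu> *\<^sub>C \<phi> u)" using \<gamma>snd[of u] by (simp add: b_def \<phi>_def prod_eq_iff)
      have "kform b b = \<i> * cinner (Gp b) (Gp b) - \<i> * cinner (Gm b) (Gm b)"
        using Gform \<gamma>K b_def by blast
      moreover have kb: "kform b b = \<i> * cinner (\<phi> u) (\<phi> u) - \<i> * cinner (\<mu> *\<^sub>C \<phi> u) (\<mu> *\<^sub>C \<phi> u)"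
        using bb by (simp add: kform_def)
      moreover have Gpb: "Gp b = u" using \<gamma>(2) b_def by simp
      ultimately have "\<i> * cinner (\<phi> u) (\<phi> u) - \<i> * cinner (\<mu> *\<^sub>C \<phi> u) (\<mu> *\<^sub>C \<phi> u)
          = \<i> * cinner u u - \<i> * cinner (Gm b) (Gm b)"
        by simp
      then have "cinner (\<phi> u) (\<phi> u) - cinner (\<mu> *\<^sub>C \<phi> u) (\<mu> *\<^sub>C \<phi> u)
          = cinner u u - cinner (Gm b) (Gm b)" by (rule i_cancel)
      from arg_cong[OF this, of Re] have "Re (cinner (\<phi> u) (\<phi> u)) - (cmod \<mu>)^2 * Re (cinner (\<phi> u) (\<phi> u))
          = Re (cinner u u) - Re (cinner (Gm b) (Gm b))"
        by (simp only: minus_complex.sel cinner_cscale_self Re_complex_of_real)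
      then show "(1 - (cmod \<mu>)^2) * Re (cinner (\<phi> u) (\<phi> u)) \<le> Re (cinner u u)"
        using cinner_ge_zero[of "Gm b"] by (simp add: algebra_simps)
    qed
    obtain vx where vx: "\<forall>z. cinner vx z = cinner x (\<phi> z)"
      using dual_exists[OF \<phi>add \<phi>sc \<phi>bd] by blast
    obtain vy where vy: "\<forall>z. cinner vy z = cinner y (\<phi> z)"
      using dual_exists[OF \<phi>add \<phi>sc \<phi>bd] by blast
    have phip: "phi_plus T Gp (cnj lam) z = \<phi> z" for z
      by (simp add: phi_plus_def \<phi>_def \<gamma>_def \<mu>_def)
    have fx: "f_sec_minus T Gp (hat x) lam = vx"
      unfolding f_sec_minus_def phi_plus_dag_def hat_def phip using vx by (rule the_dual)
    have fy: "f_sec_minus T Gp (hat y) lam = vy"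
      unfolding f_sec_minus_def phi_plus_dag_def hat_def phip using vy by (rule the_dual)
    have BL: "cbounded_linear (B \<mu>)" using Wp(2)[OF \<mu>] .
    show ?thesis unfolding fx fy \<mu>_def[symmetric]
    proof (rule cinner_ext)
      fix z
      define b where "b = \<gamma> z"
      have bb: "b = (\<phi> z, \<mu> *\<^sub>C \<phi> z)" using \<gamma>snd[of z] by (simp add: b_def \<phi>_def prod_eq_iff)
      have Gmb: "Gm b = B \<mu> z" using Wp(3)[OF \<mu> \<gamma>(1)[of z]] \<gamma>(2)[of z] by (simp add: b_def)
      have adj: "cinner (Gm a) (B \<mu> z) = cinner (cadj (B \<mu>) (Gm a)) z"
        using cadj_prop[OF BL, of z "Gm a"] by (metis cinner_commute)
      have "kform a b = \<i> * cinner (Gp a) (Gp b) - \<i> * cinner (Gm a) (Gm b)"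
        using Gform aK \<gamma>K b_def by blast
      moreover have kb: "kform a b = \<i> * cinner x (\<phi> z) - \<i> * (lam * cinner y (\<phi> z))"
        using bb by (simp add: kform_def a_def cinner_cscale_right \<mu>_def)
      moreover have Gpb: "Gp b = z" using \<gamma>(2) b_def by simp
      ultimately have "\<i> * cinner x (\<phi> z) - \<i> * (lam * cinner y (\<phi> z))
          = \<i> * cinner (Gp a) z - \<i> * cinner (cadj (B \<mu>) (Gm a)) z"
        using adj Gmb by simp
      then have "cinner x (\<phi> z) - lam * cinner y (\<phi> z)
          = cinner (Gp a) z - cinner (cadj (B \<mu>) (Gm a)) z"
        by (rule i_cancel)
      then show "cinner (vx - lam *\<^sub>C vy) z = cinner (Gp a - cadj (B \<mu>) (Gm a)) z"
        using vx vy by (simp add: cinner_diff_left cinner_cscale_left)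
    qed
  qed
  show ?thesis using part1 part2 by (simp add: a_def)
qed

end
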